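(* Let $(\omega_n)_{n\ge1}$ be nonzero complex numbers with $\liminf_{n\to\infty}(\operatorname{Re}\omega_{n+1}-\operatorname{Re}\omega_n)=\gamma>0$ and $(\operatorname{Im}\omega_n)$ bounded, and let $(c_n)$ be complex numbers with $|c_n|\le M/|\omega_n|$ for all $n$, for some $M>0$. Then for every $\varepsilon\in(0,1)$ and every $T>\frac{2\pi}{\gamma\sqrt{1-\varepsilon}}$ there exists $n_0=n_0(\varepsilon)\in\mathbb{N}$, independent of $T$ and of $(C_n)$, such that for every complex sequence $(C_n)$ with $\sum|C_n|^2<\infty$, $$\int_0^\infty k(t)\Big(\Big|\sum_{n=n_0}^\infty C_ne^{i\omega_nt}+\overline{C_n}e^{-i\overline{\omega_n}t}\Big|^2-2\Big|\sum_{n=n_0}^\infty c_nC_ne^{i\omega_nt}+\overline{c_nC_n}e^{-i\overline{\omega_n}t}\Big|^2\Big)dt$$ $$\ge 2\pi T\sum_{n=n_0}^\infty\Big(\frac{1-\varepsilon}{\pi^2+4T^2(\operatorname{Im}\omega_n)^2}-\frac{4(1+\varepsilon)}{T^2\gamma^2}\Big)(1+e^{-2\operatorname{Im}\omega_nT})|C_n|^2 .$$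
   Context: For $T>0$, $k(t):=\sin(\pi t/T)$ for $t\in[0,T]$ and $k(t):=0$ otherwise. *)

theory Defs
  imports "HOL-Analysis.Analysis"
begin

definition kfun :: "real \<Rightarrow> real \<Rightarrow> real" where
  "kfun T t = (if 0 \<le> t \<and> t \<le> T then sin (pi * t / T) else 0)"

definition psum :: "(nat \<Rightarrow> complex) \<Rightarrow> (nat \<Rightarrow> complex) \<Rightarrow> nat \<Rightarrow> nat \<Rightarrow> real \<Rightarrow> complex" where
  "psum w D n0 N t = (\<Sum>n\<in>{n0..<N}. D n * exp (\<i> * w n * of_real t)
                          + cnj (D n) * exp (- \<i> * cnj (w n) * of_real t))"

end

theory Submission
  imports Defs
begin


lemma K_has_integral:
  fixes T :: real and z :: complex
  assumes T: "T > 0" and nz: "z^2 \<noteq> (of_real (pi/T))^2"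
  shows "((\<lambda>t. of_real (sin (pi*t/T)) * exp (\<i> * z * of_real t)) has_integral
     (of_real (pi/T) * (1 + exp (\<i> * z * of_real T)) / ((of_real (pi/T))^2 - z^2))) {0..T}"
proof -
  define b :: complex where "b = of_real (pi/T)"
  define d where "d = z^2 - b^2"
  have d0: "d \<noteq> 0" using nz by (simp add: d_def b_def)
  define p where "p = - \<i> * z / d"
  define q where "q = b / d"
  define G where "G w = exp (\<i>*z*w) * (p * sin (b*w) + q * cos (b*w))" for w
  have dG: "(G has_field_derivative (exp (\<i>*z*w) * sin (b*w))) (at w)" for w
  proof -
    have "(G has_field_derivative (exp (\<i>*z*w) * (\<i>*z) * (p * sin (b*w) + q * cos (b*w))
            + exp (\<i>*z*w) * (p * (cos (b*w) * b) - q * (sin (b*w) * b)))) (at w)"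
      unfolding G_def by (auto intro!: derivative_eq_intros simp: algebra_simps)
    moreover have "exp (\<i>*z*w) * (\<i>*z) * (p * sin (b*w) + q * cos (b*w))
            + exp (\<i>*z*w) * (p * (cos (b*w) * b) - q * (sin (b*w) * b))
          = exp (\<i>*z*w) * sin (b*w)"
    proof -
      have "\<i>*z*p - q*b = (z^2 - b^2)/d" unfolding p_def q_def
        by (simp add: diff_divide_distrib power2_eq_square algebra_simps)
      then have e1: "\<i>*z*p - q*b = 1" using d0 by (simp add: d_def)
      have e2: "\<i>*z*q + p*b = 0" unfolding p_def q_def by (simp add: field_simps)
      have "exp (\<i>*z*w) * (\<i>*z) * (p * sin (b*w) + q * cos (b*w))
            + exp (\<i>*z*w) * (p * (cos (b*w) * b) - q * (sin (b*w) * b))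
           = exp (\<i>*z*w) * ((\<i>*z*p - q*b) * sin (b*w) + (\<i>*z*q + p*b) * cos (b*w))"
        by (simp add: algebra_simps)
      then show ?thesis using e1 e2 by simp
    qed
    ultimately show ?thesis by simp
  qed
  have "((\<lambda>x. exp (\<i>*z * of_real x) * sin (b * of_real x)) has_integral (G (of_real T) - G (of_real 0))) {0..T}"
    apply (rule fundamental_theorem_of_calculus)
    using T apply simp
    apply (rule has_vector_derivative_real_field)
    apply (rule dG)
    done
  moreover have "G (of_real T) - G (of_real 0) = of_real (pi/T) * (1 + exp (\<i> * z * of_real T)) / ((of_real (pi/T))^2 - z^2)"
  proof -
    have "b * of_real T = of_real pi" using T by (simp add: b_def)
    then have "sin (b * of_real T) = 0" "cos (b * of_real T) = -1"
      by (simp_all add: sin_of_real cos_of_real)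
    then have "G (of_real T) - G (of_real 0) = - q * (1 + exp (\<i> * z * of_real T))"
      unfolding G_def by (simp add: algebra_simps)
    also have "\<dots> = b * (1 + exp (\<i> * z * of_real T)) / (b^2 - z^2)"
      unfolding q_def d_def using d0 by (simp add: field_simps d_def)
    finally show ?thesis by (simp add: b_def)
  qed
  moreover have "exp (\<i>*z * of_real x) * sin (b * of_real x) = of_real (sin (pi*x/T)) * exp (\<i> * z * of_real x)" for x
  proof -
    have "b * of_real x = of_real (pi*x/T)" by (simp add: b_def)
    then have "sin (b * of_real x) = of_real (sin (pi*x/T))" by (simp only: sin_of_real)
    then show ?thesis by (simp add: mult.commute)
  qed
  ultimately show ?thesis by simp
qed


definition Kf :: "real \<Rightarrow> complex \<Rightarrow> complex" where
  "Kf T z = integral {0..T} (\<lambda>t. of_real (sin (pi*t/T)) * exp (\<i> * z * of_real t))"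

definition Amat :: "real \<Rightarrow> (nat \<Rightarrow> complex) \<Rightarrow> (nat \<Rightarrow> complex) \<Rightarrow> nat \<Rightarrow> nat \<Rightarrow> complex" where
  "Amat T w D n m = D n * cnj (D m) * Kf T (w n - cnj (w m)) + D n * D m * Kf T (w n + w m)"

definition Ssum :: "real \<Rightarrow> (nat \<Rightarrow> complex) \<Rightarrow> (nat \<Rightarrow> complex) \<Rightarrow> nat \<Rightarrow> nat \<Rightarrow> complex" where
  "Ssum T w D n0 N = (\<Sum>n\<in>{n0..<N}. \<Sum>m\<in>{n0..<N}. Amat T w D n m)"

definition Efun :: "(nat \<Rightarrow> complex) \<Rightarrow> (nat \<Rightarrow> complex) \<Rightarrow> nat \<Rightarrow> nat \<Rightarrow> real \<Rightarrow> complex" where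
  "Efun w D n0 N t = (\<Sum>n\<in>{n0..<N}. \<Sum>m\<in>{n0..<N}.
      D n * cnj (D m) * exp (\<i> * (w n - cnj (w m)) * of_real t) + D n * D m * exp (\<i> * (w n + w m) * of_real t))"

lemma Kf_has_integral:
  assumes "T > 0" shows "((\<lambda>t. of_real (sin (pi*t/T)) * exp (\<i> * z * of_real t)) has_integral Kf T z) {0..T}"
proof -
  have "continuous_on {0..T} (\<lambda>t. of_real (sin (pi*t/T)) * exp (\<i> * z * of_real t))"
    using assms by (intro continuous_intros) auto
  then show ?thesis unfolding Kf_def
    using integrable_continuous_interval has_integral_integral by blast
qed

lemma Efun_has_integral:
  assumes T: "T > 0" shows "((\<lambda>t. of_real (sin (pi*t/T)) * Efun w D n0 N t) has_integral Ssum T w D n0 N) {0..T}"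
proof -
  have "((\<lambda>t. of_real (sin (pi*t/T)) * (D n * cnj (D m) * exp (\<i> * (w n - cnj (w m)) * of_real t)
         + D n * D m * exp (\<i> * (w n + w m) * of_real t))) has_integral Amat T w D n m) {0..T}" for n m
  proof -
    have "((\<lambda>t. (D n * cnj (D m)) * (of_real (sin (pi*t/T)) * exp (\<i> * (w n - cnj (w m)) * of_real t))
         + (D n * D m) * (of_real (sin (pi*t/T)) * exp (\<i> * (w n + w m) * of_real t))) has_integral
         (D n * cnj (D m)) * Kf T (w n - cnj (w m)) + (D n * D m) * Kf T (w n + w m)) {0..T}"
      by (intro has_integral_add has_integral_mult_right Kf_has_integral T)
    then show ?thesis unfolding Amat_def by (simp add: algebra_simps)
  qed
  then have "((\<lambda>t. \<Sum>n\<in>{n0..<N}. \<Sum>m\<in>{n0..<N}. of_real (sin (pi*t/T)) * (D n * cnj (D m) * exp (\<i> * (w n - cnj (w m)) * of_real t)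
         + D n * D m * exp (\<i> * (w n + w m) * of_real t))) has_integral Ssum T w D n0 N) {0..T}"
    unfolding Ssum_def by (intro has_integral_sum) auto
  then show ?thesis unfolding Efun_def by (simp add: sum_distrib_left)
qed

lemma cnj_exp_term: "cnj (D * exp (\<i> * w * of_real t)) = cnj D * exp (- \<i> * cnj w * of_real t)"
  by (simp add: exp_cnj)

lemma psum_sq:
  "(cmod (psum w D n0 N t))^2 = Re (2 * Efun w D n0 N t)"
proof -
  define S where "S = (\<Sum>n\<in>{n0..<N}. D n * exp (\<i> * w n * of_real t))"
  have ps: "psum w D n0 N t = S + cnj S"
    unfolding psum_def S_def by (simp add: sum.distrib exp_cnj)
  have e1: "S * cnj S = (\<Sum>n\<in>{n0..<N}. \<Sum>m\<in>{n0..<N}. D n * cnj (D m) * exp (\<i> * (w n - cnj (w m)) * of_real t))"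
  proof -
    have "S * cnj S = (\<Sum>n\<in>{n0..<N}. \<Sum>m\<in>{n0..<N}. (D n * exp (\<i> * w n * of_real t)) * (cnj (D m) * exp (- \<i> * cnj (w m) * of_real t)))"
      unfolding S_def by (simp add: sum_product exp_cnj)
    also have "\<dots> = (\<Sum>n\<in>{n0..<N}. \<Sum>m\<in>{n0..<N}. D n * cnj (D m) * exp (\<i> * (w n - cnj (w m)) * of_real t))"
      by (intro sum.cong refl) (simp add: algebra_simps flip: exp_add)
    finally show ?thesis .
  qed
  have e2: "S * S = (\<Sum>n\<in>{n0..<N}. \<Sum>m\<in>{n0..<N}. D n * D m * exp (\<i> * (w n + w m) * of_real t))"
  proof -
    have "S * S = (\<Sum>n\<in>{n0..<N}. \<Sum>m\<in>{n0..<N}. (D n * exp (\<i> * w n * of_real t)) * (D m * exp (\<i> * w m * of_real t)))"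
      unfolding S_def by (simp add: sum_product)
    also have "\<dots> = (\<Sum>n\<in>{n0..<N}. \<Sum>m\<in>{n0..<N}. D n * D m * exp (\<i> * (w n + w m) * of_real t))"
      by (intro sum.cong refl) (simp add: algebra_simps flip: exp_add)
    finally show ?thesis .
  qed
  have "Efun w D n0 N t = S * cnj S + S * S"
    unfolding Efun_def e1 e2 by (simp add: sum.distrib)
  moreover have "(cmod (S + cnj S))^2 = Re (2 * (S * cnj S + S * S))"
  proof -
    have "S + cnj S = of_real (2 * Re S)" by (simp add: complex_add_cnj)
    then have "(cmod (S + cnj S))^2 = (2 * Re S)^2" by (simp add: power2_abs)
    then show ?thesis by (simp add: power2_eq_square algebra_simps)
  qed
  ultimately show ?thesis using ps by simp
qed

lemma main_integral:
  assumes T: "T > 0"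
  shows "((\<lambda>t. kfun T t * ((cmod (psum w C n0 N t))\<^sup>2 - 2 * (cmod (psum w D n0 N t))\<^sup>2))
          has_integral (2 * Re (Ssum T w C n0 N) - 4 * Re (Ssum T w D n0 N))) {0..}"
proof -
  have "((\<lambda>t. of_real (sin (pi*t/T)) * (2 * Efun w C n0 N t - 4 * Efun w D n0 N t))
     has_integral (2 * Ssum T w C n0 N - 4 * Ssum T w D n0 N)) {0..T}"
    using has_integral_diff[OF has_integral_mult_right[OF Efun_has_integral[OF T], of 2] has_integral_mult_right[OF Efun_has_integral[OF T], of 4]]
    by (simp add: algebra_simps)
  from has_integral_Re[OF this]
  have "((\<lambda>t. sin (pi*t/T) * (Re (2 * Efun w C n0 N t) - 2 * Re (2 * Efun w D n0 N t)))
     has_integral (2 * Re (Ssum T w C n0 N) - 4 * Re (Ssum T w D n0 N))) {0..T}"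
    by (simp add: algebra_simps)
  then have "((\<lambda>t. kfun T t * ((cmod (psum w C n0 N t))\<^sup>2 - 2 * (cmod (psum w D n0 N t))\<^sup>2))
     has_integral (2 * Re (Ssum T w C n0 N) - 4 * Re (Ssum T w D n0 N))) {0..T}"
    by (rule has_integral_cong[THEN iffD1, rotated]) (simp add: kfun_def psum_sq)
  then show ?thesis
    by (rule has_integral_on_superset) (auto simp: kfun_def)
qed


lemma Kf_formula:
  assumes T: "T > 0" and nz: "z^2 \<noteq> (of_real (pi/T))^2"
  shows "Kf T z = of_real (pi/T) * (1 + exp (\<i> * z * of_real T)) / ((of_real (pi/T))^2 - z^2)"
  using K_has_integral[OF T nz] Kf_has_integral[OF T] has_integral_unique by blast

lemma Kf_bound:
  assumes T: "T > 0" and gt: "(Re z)^2 > (pi/T)^2"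
  shows "cmod (Kf T z) \<le> (pi/T) * (1 + exp (- Im z * T)) / ((Re z)^2 - (pi/T)^2)"
proof -
  define b where "b = pi / T"
  have b0: "b > 0" using T by (simp add: b_def)
  have nz: "z^2 \<noteq> (of_real b)^2"
  proof
    assume h: "z^2 = (of_real b)^2"
    then have "Im (z^2) = 0" by (simp add: power2_eq_square)
    then have "Re z * Im z = 0" by (auto simp: power2_eq_square)
    moreover have "Re z \<noteq> 0" using gt b0 by (auto simp: b_def)
    ultimately have "Im z = 0" by auto
    then have "Re (z^2) = (Re z)^2" by (simp add: power2_eq_square)
    moreover have "Re (z^2) = b^2" using h by (simp add: power2_eq_square)
    ultimately show False using gt by (simp add: b_def)
  qed
  have K: "Kf T z = of_real b * (1 + exp (\<i> * z * of_real T)) / ((of_real b)^2 - z^2)"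
    using Kf_formula[OF T] nz by (simp add: b_def)
  have n1: "cmod (1 + exp (\<i> * z * of_real T)) \<le> 1 + exp (- Im z * T)"
  proof -
    have "cmod (1 + exp (\<i> * z * of_real T)) \<le> cmod 1 + cmod (exp (\<i> * z * of_real T))"
      by (rule norm_triangle_ineq)
    also have "cmod (exp (\<i> * z * of_real T)) = exp (- Im z * T)"
      by (simp add: norm_exp_eq_Re)
    finally show ?thesis by simp
  qed
  have n2: "cmod ((of_real b)^2 - z^2) \<ge> (Re z)^2 - b^2"
  proof -
    define x where "x = Re z"
    define y where "y = Im z"
    have "Re ((of_real b)^2 - z^2) = b^2 - x^2 + y^2" "Im ((of_real b)^2 - z^2) = - (2*x*y)"
      by (simp_all add: power2_eq_square x_def y_def)
    then have "(cmod ((of_real b)^2 - z^2))^2 = (b^2 - x^2 + y^2)^2 + (2*x*y)^2"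
      by (simp only: cmod_power2) simp
    also have "\<dots> \<ge> (x^2 - b^2)^2"
    proof -
      have "(b^2 - x^2 + y^2)^2 + (2*x*y)^2 - (x^2 - b^2)^2 = y^2 * (2*x^2 + 2*b^2 + y^2)"
        by (simp add: power2_eq_square algebra_simps)
      also have "\<dots> \<ge> 0" by simp
      finally show ?thesis by simp
    qed
    finally have "(x^2 - b^2)^2 \<le> (cmod ((of_real b)^2 - z^2))^2" .
    then have "\<bar>x^2 - b^2\<bar> \<le> cmod ((of_real b)^2 - z^2)"
      by (metis abs_le_square_iff abs_norm_cancel)
    then show ?thesis by (simp add: x_def)
  qed
  have pos: "(Re z)^2 - b^2 > 0" using gt by (simp add: b_def)
  have "cmod (Kf T z) = b * cmod (1 + exp (\<i> * z * of_real T)) / cmod ((of_real b)^2 - z^2)"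
    unfolding K using b0 by (simp add: norm_mult norm_divide)
  also have "\<dots> \<le> b * (1 + exp (- Im z * T)) / ((Re z)^2 - b^2)"
    using n1 n2 pos b0 by (intro frac_le mult_left_mono) auto
  finally show ?thesis by (simp add: b_def)
qed

lemma Kf_diag:
  assumes T: "T > 0"
  shows "Kf T (w - cnj w) = of_real (pi * T * (1 + exp (- 2 * Im w * T)) / (pi\<^sup>2 + 4 * T\<^sup>2 * (Im w)\<^sup>2))"
proof -
  define a where "a = Im w"
  define b where "b = pi / T"
  have b0: "b > 0" using T by (simp add: b_def)
  have z: "w - cnj w = \<i> * of_real (2*a)" by (simp add: complex_eq_iff a_def)
  have z2: "(w - cnj w)^2 = of_real (- 4 * a^2)" unfolding z by (simp add: power2_eq_square algebra_simps)
  have nz: "(w - cnj w)^2 \<noteq> (of_real b)^2"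
  proof
    assume "(w - cnj w)^2 = (of_real b)^2"
    then have "- 4 * a^2 = b^2" unfolding z2 by (metis of_real_eq_iff of_real_power)
    moreover have "b^2 > 0" using b0 by simp
    ultimately show False by (smt (verit) zero_le_power2)
  qed
  have e: "exp (\<i> * (w - cnj w) * of_real T) = of_real (exp (- 2 * a * T))"
    unfolding z by (simp flip: exp_of_real add: algebra_simps)
  have "Kf T (w - cnj w) = of_real (b * (1 + exp (- 2 * a * T)) / (b^2 + 4 * a^2))"
    using Kf_formula[OF T, of "w - cnj w"] nz unfolding e z2 by (simp add: b_def)
  also have "b * (1 + exp (- 2 * a * T)) / (b^2 + 4 * a^2) = pi * T * (1 + exp (- 2 * a * T)) / (pi\<^sup>2 + 4 * T\<^sup>2 * a\<^sup>2)"
  proof -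
    define P where "P = pi\<^sup>2 + 4 * T\<^sup>2 * a\<^sup>2"
    define U where "U = 1 + exp (- 2 * a * T)"
    have P0: "P \<noteq> 0" unfolding P_def by (smt (verit) pi_gt_zero zero_le_power2 mult_nonneg_nonneg zero_less_power)
    have "b^2 + 4 * a^2 = P / T^2" using T unfolding P_def b_def by (simp add: field_simps)
    then have "b * U / (b^2 + 4 * a^2) = pi * T * U / P" using T P0 by (simp add: b_def field_simps power2_eq_square)
    then show ?thesis by (simp add: P_def U_def)
  qed
  finally show ?thesis by (simp add: a_def)
qed



lemma tel1_eq: "(\<Sum>i<K. 1/((real i + 1)^2 - 1/4)) = 2 - 2/(2*real K + 1)"
proof (induction K)
  case 0 then show ?case by simp
next
  case (Suc K)
  have "1/((real K + 1)^2 - 1/4) = 2/(2*real K + 1) - 2/(2*real K + 3)"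
    by (simp add: field_simps power2_eq_square)
  then show ?case using Suc by simp
qed

lemma tel1: "(\<Sum>i<K. 1/((real i + 1)^2 - 1/4)) \<le> 2"
  unfolding tel1_eq by simp

lemma tel2_eq:
  assumes "A > 0" "g > 0"
  shows "(\<Sum>k<K. 1/((A + real k * g) * (A + (real k + 1) * g))) = (1/g) * (1/A - 1/(A + real K * g))"
proof (induction K)
  case 0 then show ?case by simp
next
  case (Suc K)
  have p1: "A + real K * g > 0" using assms by (simp add: add_pos_nonneg)
  have p2: "A + (real K + 1) * g > 0" using assms by (simp add: add_pos_nonneg)
  have "1/((A + real K * g) * (A + (real K + 1) * g)) = (1/g) * (1/(A + real K * g) - 1/(A + (real K + 1) * g))"
    using p1 p2 assms by (simp add: field_simps)
  then show ?case using Suc by (simp add: algebra_simps)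
qed

lemma half_lem: "(x::real) \<noteq> 0 \<Longrightarrow> 1/(x*x) = 2/(x*(2*x))"
  by (simp add: field_simps)

lemma tel2:
  assumes "A \<ge> g" "g > 0"
  shows "(\<Sum>k<K. 1/(A + real k * g)^2) \<le> 2/(g*A)"
proof -
  have A0: "A > 0" using assms by simp
  have "(\<Sum>k<K. 1/(A + real k * g)^2) \<le> (\<Sum>k<K. 2 * (1/((A + real k * g) * (A + (real k + 1) * g))))"
  proof (rule sum_mono)
    fix k assume "k \<in> {..<K}"
    have p1: "A + real k * g > 0" using A0 assms by (simp add: add_pos_nonneg)
    have "0 \<le> real k * g" using assms by simp
    moreover have "A + (real k + 1) * g = (A + real k * g) + g" by (simp add: algebra_simps)
    moreover have "A + real k * g + g \<le> 2 * (A + real k * g)" using assms \<open>0 \<le> real k * g\<close> by (smt (verit))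
    ultimately have le: "A + (real k + 1) * g \<le> 2 * (A + real k * g)" by simp
    have "1/(A + real k * g)^2 = 1/((A + real k * g) * (A + real k * g))" by (simp add: power2_eq_square)
    also have "\<dots> \<le> 2 / ((A + real k * g) * (A + (real k + 1) * g))"
    proof -
      have xy: "(A + real k * g) * (A + (real k + 1) * g) \<le> (A + real k * g) * (2 * (A + real k * g))"
        using p1 le by (intro mult_left_mono) auto
      have pos: "0 < (A + real k * g) * (A + (real k + 1) * g)"
        using p1 assms by (intro mult_pos_pos) (auto intro: add_pos_nonneg)
      have "1 / ((A + real k * g) * (A + real k * g)) = 2 / ((A + real k * g) * (2 * (A + real k * g)))"
        by (rule half_lem) (use p1 in simp)
      also have "\<dots> \<le> 2 / ((A + real k * g) * (A + (real k + 1) * g))"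
        by (rule frac_le) (use xy pos in auto)
      finally show ?thesis .
    qed
    finally show "1/(A + real k * g)^2 \<le> 2 * (1/((A + real k * g) * (A + (real k + 1) * g)))" by simp
  qed
  also have "\<dots> = 2 * ((1/g) * (1/A - 1/(A + real K * g)))"
    by (simp only: sum_distrib_left[symmetric] tel2_eq[OF A0 assms(2)])
  also have "\<dots> \<le> 2 * ((1/g) * (1/A))"
  proof -
    have "0 \<le> 1/(A + real K * g)" using A0 assms by simp
    then have "1/A - 1/(A + real K * g) \<le> 1/A" by simp
    then show ?thesis using assms by (intro mult_left_mono) auto
  qed
  finally show ?thesis by simp
qed

lemma schur:
  fixes h :: "nat \<Rightarrow> nat \<Rightarrow> real" and y :: "nat \<Rightarrow> real"
  assumes fin: "finite I" and sym: "\<And>n m. h n m = h m n"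
    and row: "\<And>n. n \<in> I \<Longrightarrow> (\<Sum>m\<in>I. h n m) \<le> \<beta>" and y0: "\<And>n. y n \<ge> 0"
  shows "(\<Sum>n\<in>I. \<Sum>m\<in>I. h n m * (y n + y m) / 2) \<le> \<beta> * (\<Sum>n\<in>I. y n)"
proof -
  have "(\<Sum>n\<in>I. \<Sum>m\<in>I. h n m * (y n + y m) / 2)
      = (\<Sum>n\<in>I. \<Sum>m\<in>I. h n m * y n) / 2 + (\<Sum>n\<in>I. \<Sum>m\<in>I. h n m * y m) / 2"
    by (simp add: sum.distrib sum_divide_distrib[symmetric] algebra_simps add_divide_distrib)
  also have "(\<Sum>n\<in>I. \<Sum>m\<in>I. h n m * y m) = (\<Sum>n\<in>I. \<Sum>m\<in>I. h n m * y n)"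
    by (subst sum.swap) (simp add: sym)
  also have "(\<Sum>n\<in>I. \<Sum>m\<in>I. h n m * y n) / 2 + (\<Sum>n\<in>I. \<Sum>m\<in>I. h n m * y n) / 2
       = (\<Sum>n\<in>I. y n * (\<Sum>m\<in>I. h n m))"
    by (simp add: sum_distrib_left mult.commute)
  also have "\<dots> \<le> (\<Sum>n\<in>I. y n * \<beta>)"
    by (intro sum_mono mult_left_mono row y0)
  finally show ?thesis by (simp add: sum_distrib_left mult.commute)
qed

lemma amgm:
  fixes x y p q :: real
  shows "x * y * (1 + p * q) \<le> ((1 + p^2) * x^2 + (1 + q^2) * y^2) / 2"
proof -
  have "0 \<le> (x - y)^2 + (p*x - q*y)^2" by simp
  then show ?thesis by (simp add: power2_eq_square algebra_simps)
qed



locale ing =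
  fixes w :: "nat \<Rightarrow> complex" and T g R0 :: real and n0 :: nat
  assumes T: "T > 0" and g: "g > 0" and bg: "2*(pi/T) \<le> g"
    and gap: "\<And>n. n \<ge> n0 \<Longrightarrow> Re (w n) + g \<le> Re (w (Suc n))"
    and R0: "R0 \<le> Re (w n0)" and gR0: "g \<le> R0"
begin

definition "b = pi / T"
definition "wt n = 1 + exp (- 2 * Im (w n) * T)"
definition "h1 n m = (if n = m then 0 else 1/((Re (w n) - Re (w m))^2 - b^2))"
definition "h2 n m = 1/((Re (w n) + Re (w m))^2 - b^2)"
definition "diag n = pi * T * (1 + exp (- 2 * Im (w n) * T)) / (pi\<^sup>2 + 4 * T\<^sup>2 * (Im (w n))\<^sup>2)"

lemma b0: "b > 0" using T by (simp add: b_def)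
lemma bg2: "b \<le> g/2"
proof -
  have "2 * b \<le> g" using bg by (simp add: b_def)
  then show ?thesis by linarith
qed

lemma Re_mono: "n0 \<le> n \<Longrightarrow> n \<le> m \<Longrightarrow> Re (w n) + real (m - n) * g \<le> Re (w m)"
proof (induction m)
  case 0 then show ?case by simp
next
  case (Suc m)
  show ?case
  proof (cases "n = Suc m")
    case True then show ?thesis by simp
  next
    case False
    then have "n \<le> m" using Suc by simp
    then have "Re (w n) + real (m - n) * g \<le> Re (w m)" using Suc by simp
    moreover have "Re (w m) + g \<le> Re (w (Suc m))" using gap \<open>n \<le> m\<close> Suc by simp
    moreover have "real (Suc m - n) = real (m - n) + 1" using \<open>n \<le> m\<close> by simp
    ultimately show ?thesis by (simp add: algebra_simps)
  qed
qed

lemma Re_ge: "n0 \<le> n \<Longrightarrow> R0 + real (n - n0) * g \<le> Re (w n)"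
  using Re_mono[of n0 n] R0 by simp

lemma wt_pos: "wt n > 0" by (simp add: wt_def add_pos_nonneg)

lemma diag_nonneg: "diag n \<ge> 0"
  unfolding diag_def using T by (intro divide_nonneg_pos) (auto intro: add_pos_nonneg)

lemma diag_le: "diag n \<le> T / pi * wt n"
proof -
  have "pi\<^sup>2 \<le> pi\<^sup>2 + 4 * T\<^sup>2 * (Im (w n))\<^sup>2" by simp
  then have "diag n \<le> pi * T * wt n / pi\<^sup>2"
    unfolding diag_def wt_def using T
    by (intro divide_left_mono) (auto intro!: mult_nonneg_nonneg add_nonneg_nonneg mult_pos_pos add_pos_nonneg)
  also have "\<dots> = T / pi * wt n" by (simp add: power2_eq_square)
  finally show ?thesis .
qed

lemma h1_sym: "h1 n m = h1 m n" unfolding h1_def by (simp add: power2_commute)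
lemma h2_sym: "h2 n m = h2 m n" unfolding h2_def by (simp add: add.commute)

definition "F i = 1/(g^2 * ((real i + 1)^2 - 1/4))"

lemma F_sum: "(\<Sum>i<K. F i) \<le> 2/g^2"
proof -
  have "(\<Sum>i<K. F i) = (1/g^2) * (\<Sum>i<K. 1/((real i + 1)^2 - 1/4))"
    unfolding F_def by (simp add: sum_distrib_left)
  also have "\<dots> \<le> (1/g^2) * 2" using tel1 by (intro mult_left_mono) auto
  finally show ?thesis by simp
qed

lemma F_nonneg: "F i \<ge> 0"
proof -
  have "(real i + 1)^2 \<ge> 1" by simp
  then have "(real i + 1)^2 - 1/4 > 0" by linarith
  then show ?thesis unfolding F_def using g by (intro divide_nonneg_pos mult_pos_pos) auto
qed

lemma h1_le: 
  assumes "n0 \<le> n" "n < m"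
  shows "h1 n m \<le> F (m - Suc n)" "h1 m n \<le> F (m - Suc n)"
proof -
  have d: "Re (w n) + real (m - n) * g \<le> Re (w m)" using Re_mono assms by simp
  have k: "real (m - n) = real (m - Suc n) + 1" using assms by simp
  define k where "k = real (m - Suc n) + 1"
  have k1: "k \<ge> 1" by (simp add: k_def)
  have "(k * g)^2 \<le> (Re (w m) - Re (w n))^2"
    using d k g k1 by (intro power_mono) (auto simp: k_def)
  moreover have "b^2 \<le> g^2/4"
  proof -
    have "b^2 \<le> (g/2)^2" using bg2 b0 by (intro power_mono) auto
    then show ?thesis by (simp add: power_divide)
  qed
  moreover have "g^2 * (k^2 - 1/4) = (k*g)^2 - g^2/4" by (simp add: algebra_simps power_mult_distrib)
  ultimately have le: "g^2 * (k^2 - 1/4) \<le> (Re (w m) - Re (w n))^2 - b^2"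
    by linarith
  have pos: "0 < g^2 * (k^2 - 1/4)"
  proof -
    have "k^2 \<ge> 1" using k1 by (simp add: one_le_power)
    then show ?thesis using g by simp
  qed
  have "1/((Re (w m) - Re (w n))^2 - b^2) \<le> 1/(g^2 * (k^2 - 1/4))"
    using le pos by (intro divide_left_mono) auto
  then show "h1 n m \<le> F (m - Suc n)" "h1 m n \<le> F (m - Suc n)"
    using assms unfolding h1_def F_def k_def by (auto simp: power2_commute)
qed

lemma row1:
  assumes n: "n \<in> {n0..<N}"
  shows "(\<Sum>m\<in>{n0..<N}. h1 n m) \<le> 4/g^2"
proof -
  have split: "(\<Sum>m\<in>{n0..<N}. h1 n m) = (\<Sum>m\<in>{n0..<n}. h1 n m) + (\<Sum>m\<in>{Suc n..<N}. h1 n m)"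
  proof -
    have "(\<Sum>m\<in>{n0..<N}. h1 n m) = (\<Sum>m\<in>{n0..<n}. h1 n m) + (\<Sum>m\<in>{n..<N}. h1 n m)"
      using n by (simp add: sum.atLeastLessThan_concat)
    also have "(\<Sum>m\<in>{n..<N}. h1 n m) = h1 n n + (\<Sum>m\<in>{Suc n..<N}. h1 n m)"
      using n by (simp add: sum.atLeast_Suc_lessThan)
    finally show ?thesis by (simp add: h1_def)
  qed
  have s1: "(\<Sum>m\<in>{n0..<n}. h1 n m) \<le> 2/g^2"
  proof -
    have "(\<Sum>m\<in>{n0..<n}. h1 n m) \<le> (\<Sum>m\<in>{n0..<n}. F (n - Suc m))"
      using h1_le(2) by (intro sum_mono) auto
    also have "\<dots> \<le> (\<Sum>m\<in>{..<n}. F (n - Suc m))"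
      by (intro sum_mono2) (auto simp: F_nonneg)
    also have "\<dots> = (\<Sum>i<n. F i)" by (rule sum.nat_diff_reindex)
    also have "\<dots> \<le> 2/g^2" by (rule F_sum)
    finally show ?thesis .
  qed
  have s2: "(\<Sum>m\<in>{Suc n..<N}. h1 n m) \<le> 2/g^2"
  proof -
    have "(\<Sum>m\<in>{Suc n..<N}. h1 n m) \<le> (\<Sum>m\<in>{Suc n..<N}. F (m - Suc n))"
      using h1_le(1) n by (intro sum_mono) auto
    also have "\<dots> = (\<Sum>m\<in>{0 + Suc n..<(N - Suc n) + Suc n}. F (m - Suc n))"
      using n by simp
    also have "\<dots> = (\<Sum>i\<in>{0..<N - Suc n}. F i)"
      by (subst sum.shift_bounds_nat_ivl) simp
    also have "\<dots> \<le> 2/g^2" using F_sum by (simp add: atLeast0LessThan)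
    finally show ?thesis .
  qed
  show ?thesis using split s1 s2 by simp
qed

lemma h2_le:
  assumes "n0 \<le> n" "n0 \<le> m"
  shows "h2 n m \<le> 2 / (2*R0 + real (m - n0) * g)^2"
proof -
  define S where "S = Re (w n) + Re (w m)"
  have nn1: "0 \<le> real (n - n0) * g" "0 \<le> real (m - n0) * g" using g by simp_all
  have S1: "2*R0 + real (m - n0) * g \<le> S"
    using Re_ge[OF assms(1)] Re_ge[OF assms(2)] nn1 unfolding S_def by linarith
  have S0: "2*R0 + real (m - n0) * g \<ge> 2*g" using gR0 nn1 by linarith
  have b2: "2 * b^2 \<le> S^2"
  proof -
    have "b \<le> S" using bg2 S1 S0 g by linarith
    then have "b^2 \<le> S^2" using b0 by (intro power_mono) auto
    moreover have "(2*b)^2 \<le> S^2" using bg2 S1 S0 g b0 by (intro power_mono) auto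
    ultimately show ?thesis by (simp add: power_mult_distrib)
  qed
  have Sp: "S > 0" using S1 S0 g by linarith
  have "h2 n m = 1/(S^2 - b^2)" by (simp add: h2_def S_def)
  also have "\<dots> \<le> 2 / S^2"
  proof -
    have "S^2/2 \<le> S^2 - b^2" using b2 by simp
    moreover have "S^2/2 > 0" using Sp by simp
    ultimately have "1/(S^2 - b^2) \<le> 1/(S^2/2)" by (intro divide_left_mono mult_pos_pos) linarith+
    then show ?thesis by simp
  qed
  also have "\<dots> \<le> 2 / (2*R0 + real (m - n0) * g)^2"
    using S1 S0 g by (intro divide_left_mono power_mono mult_pos_pos) auto
  finally show ?thesis .
qed

lemma row2:
  assumes n: "n \<in> {n0..<N}"
  shows "(\<Sum>m\<in>{n0..<N}. h2 n m) \<le> 2/(g*R0)"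
proof -
  have "(\<Sum>m\<in>{n0..<N}. h2 n m) \<le> (\<Sum>m\<in>{n0..<N}. 2 / (2*R0 + real (m - n0) * g)^2)"
    using h2_le n by (intro sum_mono) auto
  also have "\<dots> = (\<Sum>m\<in>{0 + n0..<(N - n0) + n0}. 2 / (2*R0 + real (m - n0) * g)^2)"
    using n by simp
  also have "\<dots> = (\<Sum>i\<in>{0..<N - n0}. 2 / (2*R0 + real i * g)^2)"
    by (subst sum.shift_bounds_nat_ivl) simp
  also have "\<dots> = 2 * (\<Sum>i<N - n0. 1 / (2*R0 + real i * g)^2)"
    by (simp add: sum_distrib_left atLeast0LessThan)
  also have "\<dots> \<le> 2 * (2 / (g * (2*R0)))"
    using tel2[of g "2*R0"] gR0 g by (intro mult_left_mono) auto
  finally show ?thesis using g gR0 by (simp add: field_simps)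
qed

end



context ing begin

definition "beta = 4/g^2 + 2/(g*R0)"
definition "yy D n = wt n * (cmod (D n))^2"
definition "off1 D n m = (if n = m then 0 else D n * cnj (D m) * Kf T (w n - cnj (w m)))"
definition "fam2 D n m = D n * D m * Kf T (w n + w m)"

lemma yy_nonneg: "yy D n \<ge> 0" unfolding yy_def using less_imp_le[OF wt_pos[of n]] by simp

lemma gen_bound:
  assumes Imz: "Im z = Im (w n) + Im (w m)" and gt: "(Re z)^2 > b^2" and X: "cmod X = cmod (D n) * cmod (D m)"
  shows "cmod (X * Kf T z) \<le> b * (1/((Re z)^2 - b^2)) * ((yy D n + yy D m)/2)"
proof -
  define p where "p = exp (- Im (w n) * T)"
  define q where "q = exp (- Im (w m) * T)"
  have pq: "exp (- Im z * T) = p * q" unfolding p_def q_def Imz by (simp add: algebra_simps flip: exp_add)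
  have K: "cmod (Kf T z) \<le> b * (1 + p * q) / ((Re z)^2 - b^2)"
    using Kf_bound[OF T, of z] gt pq by (simp add: b_def)
  have pos: "(Re z)^2 - b^2 > 0" using gt by simp
  have am: "cmod (D n) * cmod (D m) * (1 + p * q) \<le> ((1 + p^2) * (cmod (D n))^2 + (1 + q^2) * (cmod (D m))^2) / 2"
    by (rule amgm)
  have p2: "1 + p^2 = wt n" "1 + q^2 = wt m"
    unfolding p_def q_def wt_def by (simp_all add: power2_eq_square flip: exp_add)
  have "cmod (X * Kf T z) = cmod (D n) * cmod (D m) * cmod (Kf T z)" by (simp add: norm_mult X)
  also have "\<dots> \<le> cmod (D n) * cmod (D m) * (b * (1 + p * q) / ((Re z)^2 - b^2))"
    by (intro mult_left_mono K) auto
  also have "\<dots> = b * (1/((Re z)^2 - b^2)) * (cmod (D n) * cmod (D m) * (1 + p * q))"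
    by (simp add: field_simps)
  also have "\<dots> \<le> b * (1/((Re z)^2 - b^2)) * ((yy D n + yy D m)/2)"
    using am p2 pos b0 unfolding yy_def by (intro mult_left_mono) auto
  finally show ?thesis .
qed

lemma term1:
  assumes "n0 \<le> n" "n0 \<le> m"
  shows "cmod (off1 D n m) \<le> b * h1 n m * ((yy D n + yy D m)/2)"
proof (cases "n = m")
  case True then show ?thesis by (simp add: off1_def h1_def)
next
  case False
  define z where "z = w n - cnj (w m)"
  have Rez: "Re z = Re (w n) - Re (w m)" and Imz: "Im z = Im (w n) + Im (w m)" by (simp_all add: z_def)
  have ge: "\<bar>Re z\<bar> \<ge> g"
  proof (cases "n < m")
    case True
    then have "Re (w n) + real (m - n) * g \<le> Re (w m)" using Re_mono assms by simp
    moreover have "real (m - n) * g \<ge> g" using True g by simp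
    ultimately show ?thesis unfolding Rez by linarith
  next
    case False
    then have "m < n" using \<open>n \<noteq> m\<close> by simp
    then have "Re (w m) + real (n - m) * g \<le> Re (w n)" using Re_mono assms by simp
    moreover have "real (n - m) * g \<ge> g" using \<open>m < n\<close> g by simp
    ultimately show ?thesis unfolding Rez by linarith
  qed
  have gt: "(Re z)^2 > b^2"
  proof -
    have "b < \<bar>Re z\<bar>" using ge bg2 g by linarith
    then have "b^2 < \<bar>Re z\<bar>^2" using b0 by (intro power_strict_mono) auto
    then show ?thesis by simp
  qed
  have "cmod (D n * cnj (D m) * Kf T z) \<le> b * (1/((Re z)^2 - b^2)) * ((yy D n + yy D m)/2)"
    by (rule gen_bound[OF Imz gt]) (simp add: norm_mult)
  then show ?thesis using False unfolding off1_def h1_def z_def by simp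
qed

lemma term2:
  assumes "n0 \<le> n" "n0 \<le> m"
  shows "cmod (fam2 D n m) \<le> b * h2 n m * ((yy D n + yy D m)/2)"
proof -
  define z where "z = w n + w m"
  have Rez: "Re z = Re (w n) + Re (w m)" and Imz: "Im z = Im (w n) + Im (w m)" by (simp_all add: z_def)
  have "R0 \<le> Re (w n)" "R0 \<le> Re (w m)" using Re_ge assms g
    by (smt (verit) mult_nonneg_nonneg of_nat_0_le_iff)+
  then have ge: "Re z \<ge> 2 * g" using gR0 unfolding Rez by linarith
  have gt: "(Re z)^2 > b^2"
  proof -
    have "b < Re z" using ge bg2 g by linarith
    then have "b^2 < (Re z)^2" using b0 by (intro power_strict_mono) auto
    then show ?thesis by simp
  qed
  have "cmod (D n * D m * Kf T z) \<le> b * (1/((Re z)^2 - b^2)) * ((yy D n + yy D m)/2)"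
    by (rule gen_bound[OF Imz gt]) (simp add: norm_mult)
  then show ?thesis unfolding fam2_def h2_def z_def by (simp add: Rez[unfolded z_def])
qed

lemma Qbound:
  "(\<Sum>n\<in>{n0..<N}. \<Sum>m\<in>{n0..<N}. cmod (off1 D n m) + cmod (fam2 D n m))
     \<le> b * beta * (\<Sum>n\<in>{n0..<N}. yy D n)"
proof -
  have "(\<Sum>n\<in>{n0..<N}. \<Sum>m\<in>{n0..<N}. cmod (off1 D n m) + cmod (fam2 D n m))
     \<le> (\<Sum>n\<in>{n0..<N}. \<Sum>m\<in>{n0..<N}. b * ((h1 n m + h2 n m) * (yy D n + yy D m) / 2))"
  proof (intro sum_mono)
    fix n m assume "n \<in> {n0..<N}" "m \<in> {n0..<N}"
    then have "cmod (off1 D n m) \<le> b * h1 n m * ((yy D n + yy D m)/2)"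
          "cmod (fam2 D n m) \<le> b * h2 n m * ((yy D n + yy D m)/2)"
      using term1 term2 by auto
    then show "cmod (off1 D n m) + cmod (fam2 D n m) \<le> b * ((h1 n m + h2 n m) * (yy D n + yy D m) / 2)"
      by (simp add: algebra_simps)
  qed
  also have "\<dots> = b * (\<Sum>n\<in>{n0..<N}. \<Sum>m\<in>{n0..<N}. (h1 n m + h2 n m) * (yy D n + yy D m) / 2)"
    by (simp add: sum_distrib_left)
  also have "\<dots> \<le> b * (beta * (\<Sum>n\<in>{n0..<N}. yy D n))"
  proof (intro mult_left_mono)
    show "0 \<le> b" using b0 by simp
    show "(\<Sum>n\<in>{n0..<N}. \<Sum>m\<in>{n0..<N}. (h1 n m + h2 n m) * (yy D n + yy D m) / 2) \<le> beta * (\<Sum>n\<in>{n0..<N}. yy D n)"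
    proof (rule schur)
      show "finite {n0..<N}" by simp
      show "h1 n m + h2 n m = h1 m n + h2 m n" for n m using h1_sym h2_sym by simp
      show "yy D n \<ge> 0" for n by (rule yy_nonneg)
      show "(\<Sum>m\<in>{n0..<N}. h1 n m + h2 n m) \<le> beta" if "n \<in> {n0..<N}" for n
        using row1[OF that] row2[OF that] unfolding beta_def by (simp add: sum.distrib)
    qed
  qed
  finally show ?thesis by simp
qed

lemma Amat_decomp:
  "Amat T w D n m = (if n = m then of_real (diag n * (cmod (D n))^2) else 0) + off1 D n m + fam2 D n m"
proof (cases "n = m")
  case True
  have k: "Kf T (w n - cnj (w n)) = of_real (diag n)"
    by (simp only: Kf_diag[OF T] diag_def)
  have "D n * cnj (D n) = of_real ((cmod (D n))^2)" by (simp only: complex_norm_square)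
  then have "D n * cnj (D n) * Kf T (w n - cnj (w n)) = of_real ((cmod (D n))^2) * of_real (diag n)"
    using k by simp
  then show ?thesis using True unfolding Amat_def off1_def fam2_def by (simp add: mult.commute)
next
  case False then show ?thesis unfolding Amat_def off1_def fam2_def by simp
qed

lemma Ssum_decomp:
  "Ssum T w D n0 N = of_real (\<Sum>n\<in>{n0..<N}. diag n * (cmod (D n))^2)
      + (\<Sum>n\<in>{n0..<N}. \<Sum>m\<in>{n0..<N}. off1 D n m + fam2 D n m)"
proof -
  have "Ssum T w D n0 N = (\<Sum>n\<in>{n0..<N}. \<Sum>m\<in>{n0..<N}. (if n = m then of_real (diag n * (cmod (D n))^2) else 0))
      + (\<Sum>n\<in>{n0..<N}. \<Sum>m\<in>{n0..<N}. off1 D n m + fam2 D n m)"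
    unfolding Ssum_def Amat_decomp by (simp add: sum.distrib add.assoc)
  also have "(\<Sum>n\<in>{n0..<N}. \<Sum>m\<in>{n0..<N}. (if n = m then of_real (diag n * (cmod (D n))^2) else 0))
      = (\<Sum>n\<in>{n0..<N}. (of_real (diag n * (cmod (D n))^2) :: complex))"
    by (intro sum.cong refl) (simp add: sum.delta)
  finally show ?thesis by simp
qed

lemma offnorm:
  "cmod (\<Sum>n\<in>{n0..<N}. \<Sum>m\<in>{n0..<N}. off1 D n m + fam2 D n m) \<le> b * beta * (\<Sum>n\<in>{n0..<N}. yy D n)"
proof -
  have "cmod (\<Sum>n\<in>{n0..<N}. \<Sum>m\<in>{n0..<N}. off1 D n m + fam2 D n m)
     \<le> (\<Sum>n\<in>{n0..<N}. cmod (\<Sum>m\<in>{n0..<N}. off1 D n m + fam2 D n m))" by (rule norm_sum)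
  also have "\<dots> \<le> (\<Sum>n\<in>{n0..<N}. \<Sum>m\<in>{n0..<N}. cmod (off1 D n m + fam2 D n m))"
    by (intro sum_mono norm_sum)
  also have "\<dots> \<le> (\<Sum>n\<in>{n0..<N}. \<Sum>m\<in>{n0..<N}. cmod (off1 D n m) + cmod (fam2 D n m))"
    by (intro sum_mono norm_triangle_ineq)
  also have "\<dots> \<le> b * beta * (\<Sum>n\<in>{n0..<N}. yy D n)" by (rule Qbound)
  finally show ?thesis .
qed

lemma Re_Ssum_bounds:
  "Re (Ssum T w D n0 N) \<ge> (\<Sum>n\<in>{n0..<N}. diag n * (cmod (D n))^2) - b * beta * (\<Sum>n\<in>{n0..<N}. yy D n)"
  "Re (Ssum T w D n0 N) \<le> (\<Sum>n\<in>{n0..<N}. diag n * (cmod (D n))^2) + b * beta * (\<Sum>n\<in>{n0..<N}. yy D n)"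
proof -
  define X where "X = (\<Sum>n\<in>{n0..<N}. \<Sum>m\<in>{n0..<N}. off1 D n m + fam2 D n m)"
  have "\<bar>Re X\<bar> \<le> b * beta * (\<Sum>n\<in>{n0..<N}. yy D n)"
    using abs_Re_le_cmod[of X] offnorm[of D N] unfolding X_def by linarith
  moreover have "Re (Ssum T w D n0 N) = (\<Sum>n\<in>{n0..<N}. diag n * (cmod (D n))^2) + Re X"
    unfolding Ssum_decomp X_def by simp
  ultimately show "Re (Ssum T w D n0 N) \<ge> (\<Sum>n\<in>{n0..<N}. diag n * (cmod (D n))^2) - b * beta * (\<Sum>n\<in>{n0..<N}. yy D n)"
    "Re (Ssum T w D n0 N) \<le> (\<Sum>n\<in>{n0..<N}. diag n * (cmod (D n))^2) + b * beta * (\<Sum>n\<in>{n0..<N}. yy D n)"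
    by linarith+
qed

lemma abs_Amat_sum:
  "(\<Sum>n\<in>{n0..<N}. \<Sum>m\<in>{n0..<N}. cmod (Amat T w D n m))
     \<le> (\<Sum>n\<in>{n0..<N}. diag n * (cmod (D n))^2) + b * beta * (\<Sum>n\<in>{n0..<N}. yy D n)"
proof -
  have "(\<Sum>n\<in>{n0..<N}. \<Sum>m\<in>{n0..<N}. cmod (Amat T w D n m))
     \<le> (\<Sum>n\<in>{n0..<N}. \<Sum>m\<in>{n0..<N}. (if n = m then diag n * (cmod (D n))^2 else 0) + (cmod (off1 D n m) + cmod (fam2 D n m)))"
  proof (intro sum_mono)
    fix n m
    {
      fix a c d :: complex
      have "cmod (a + c + d) \<le> cmod (a + c) + cmod d" by (rule norm_triangle_ineq)
      moreover have "cmod (a + c) \<le> cmod a + cmod c" by (rule norm_triangle_ineq)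
      ultimately have "cmod (a + c + d) \<le> cmod a + cmod c + cmod d" by linarith
    } note tri = this
    have "cmod (Amat T w D n m) \<le> cmod (if n = m then of_real (diag n * (cmod (D n))^2) else 0 :: complex) + cmod (off1 D n m) + cmod (fam2 D n m)"
      unfolding Amat_decomp by (rule tri)
    moreover have "cmod (if n = m then of_real (diag n * (cmod (D n))^2) else 0 :: complex) = (if n = m then diag n * (cmod (D n))^2 else 0)"
    proof (cases "n = m")
      case True
      have "cmod (of_real (diag n * (cmod (D n))^2) :: complex) = \<bar>diag n * (cmod (D n))^2\<bar>"
        by (rule norm_of_real)
      also have "\<dots> = diag n * (cmod (D n))^2" using diag_nonneg[of n] by simp
      finally show ?thesis using True by simp
    qed simp
    ultimately show "cmod (Amat T w D n m) \<le> (if n = m then diag n * (cmod (D n))^2 else 0) + (cmod (off1 D n m) + cmod (fam2 D n m))"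
      by simp
  qed
  also have "\<dots> = (\<Sum>n\<in>{n0..<N}. diag n * (cmod (D n))^2) + (\<Sum>n\<in>{n0..<N}. \<Sum>m\<in>{n0..<N}. cmod (off1 D n m) + cmod (fam2 D n m))"
    by (simp add: sum.distrib sum.delta)
  also have "\<dots> \<le> (\<Sum>n\<in>{n0..<N}. diag n * (cmod (D n))^2) + b * beta * (\<Sum>n\<in>{n0..<N}. yy D n)"
    using Qbound by simp
  finally show ?thesis .
qed

end



context ing begin

lemma Ssum_prod: "Ssum T w D n0 N = (\<Sum>p\<in>{n0..<N} \<times> {n0..<N}. Amat T w D (fst p) (snd p))"
  unfolding Ssum_def by (simp add: sum.cartesian_product split_def)

lemma Ssum_convergent:
  assumes Y: "\<And>N. (\<Sum>n\<in>{n0..<N}. yy D n) \<le> Y"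
  shows "convergent (\<lambda>N. Ssum T w D n0 N)"
proof -
  define P where "P N = (\<Sum>p\<in>{n0..<N} \<times> {n0..<N}. cmod (Amat T w D (fst p) (snd p)))" for N
  have Pbd: "P N \<le> (T/pi + b * beta) * Y" for N
  proof -
    have "P N = (\<Sum>n\<in>{n0..<N}. \<Sum>m\<in>{n0..<N}. cmod (Amat T w D n m))"
      unfolding P_def by (simp add: sum.cartesian_product split_def)
    also have "\<dots> \<le> (\<Sum>n\<in>{n0..<N}. diag n * (cmod (D n))^2) + b * beta * (\<Sum>n\<in>{n0..<N}. yy D n)"
      by (rule abs_Amat_sum)
    also have "(\<Sum>n\<in>{n0..<N}. diag n * (cmod (D n))^2) \<le> (\<Sum>n\<in>{n0..<N}. T/pi * yy D n)"
    proof (intro sum_mono)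
      fix n
      have "diag n * (cmod (D n))^2 \<le> (T/pi * wt n) * (cmod (D n))^2"
        using diag_le[of n] by (intro mult_right_mono) auto
      then show "diag n * (cmod (D n))^2 \<le> T/pi * yy D n" by (simp add: yy_def)
    qed
    also have "\<dots> = T/pi * (\<Sum>n\<in>{n0..<N}. yy D n)" by (simp add: sum_distrib_left)
    also have "T/pi * (\<Sum>n\<in>{n0..<N}. yy D n) + b * beta * (\<Sum>n\<in>{n0..<N}. yy D n) \<le> T/pi * Y + b * beta * Y"
    proof -
      have "beta \<ge> 0" unfolding beta_def using g gR0 by simp
      then have "b * beta \<ge> 0" using b0 by simp
      moreover have "T/pi \<ge> 0" using T by simp
      ultimately show ?thesis using Y[of N] by (intro add_mono mult_left_mono) auto
    qed
    finally show ?thesis by (simp add: algebra_simps)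
  qed
  have Pmono: "P M \<le> P N" if "M \<le> N" for M N
    unfolding P_def using that by (intro sum_mono2) auto
  have "convergent P"
  proof (rule Bseq_monoseq_convergent)
    show "Bseq P"
    proof (rule BseqI')
      fix N
      have "P N \<ge> 0" unfolding P_def by (intro sum_nonneg) auto
      then show "norm (P N) \<le> (T/pi + b * beta) * Y" using Pbd[of N] by simp
    qed
    show "monoseq P" unfolding monoseq_def using Pmono by blast
  qed
  then have CP: "Cauchy P" by (rule convergent_Cauchy)
  have diff: "cmod (Ssum T w D n0 N - Ssum T w D n0 M) \<le> P N - P M" if "M \<le> N" for M N
  proof -
    have sub: "{n0..<M} \<times> {n0..<M} \<subseteq> {n0..<N} \<times> {n0..<N}" using that by auto
    have "Ssum T w D n0 N - Ssum T w D n0 M = (\<Sum>p\<in>{n0..<N} \<times> {n0..<N} - {n0..<M} \<times> {n0..<M}. Amat T w D (fst p) (snd p))"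
      unfolding Ssum_prod by (subst sum_diff[OF _ sub]) auto
    also have "cmod \<dots> \<le> (\<Sum>p\<in>{n0..<N} \<times> {n0..<N} - {n0..<M} \<times> {n0..<M}. cmod (Amat T w D (fst p) (snd p)))"
      by (rule norm_sum)
    also have "\<dots> = P N - P M" unfolding P_def by (subst sum_diff[OF _ sub]) auto
    finally show ?thesis .
  qed
  have "Cauchy (\<lambda>N. Ssum T w D n0 N)"
  proof (rule metric_CauchyI)
    fix e :: real assume "e > 0"
    then obtain K where K: "\<And>m n. m \<ge> K \<Longrightarrow> n \<ge> K \<Longrightarrow> dist (P m) (P n) < e"
      using CP unfolding Cauchy_def by blast
    show "\<exists>K. \<forall>m\<ge>K. \<forall>n\<ge>K. dist (Ssum T w D n0 m) (Ssum T w D n0 n) < e"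
    proof (intro exI allI impI)
      fix m n assume mn: "m \<ge> K" "n \<ge> K"
      show "dist (Ssum T w D n0 m) (Ssum T w D n0 n) < e"
      proof (cases "m \<le> n")
        case True
        have "dist (Ssum T w D n0 m) (Ssum T w D n0 n) = cmod (Ssum T w D n0 n - Ssum T w D n0 m)"
          by (simp add: dist_norm norm_minus_commute)
        also have "\<dots> \<le> P n - P m" using diff True by blast
        also have "\<dots> < e" using K[OF mn] by (simp add: dist_real_def)
        finally show ?thesis .
      next
        case False
        have "dist (Ssum T w D n0 m) (Ssum T w D n0 n) = cmod (Ssum T w D n0 m - Ssum T w D n0 n)"
          by (simp add: dist_norm)
        also have "\<dots> \<le> P m - P n" using diff False by simp
        also have "\<dots> < e" using K[OF mn] by (simp add: dist_real_def)
        finally show ?thesis .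
      qed
    qed
  qed
  then show ?thesis by (simp add: Cauchy_convergent_iff)
qed

end



lemma beta_ineq:
  fixes \<epsilon> \<gamma> g R0 :: real
  assumes e: "0 < \<epsilon>" "\<epsilon> < 1" and gam: "\<gamma> > 0" and gdef: "g = \<gamma> * (1 - \<epsilon>/16)"
    and R: "R0 \<ge> 2*\<gamma>^2/(\<epsilon>*g)"
  shows "4/g^2 + 2/(g*R0) \<le> (4 + 2*\<epsilon>)/\<gamma>^2"
proof -
  have g0: "g > 0" using e gam gdef by simp
  have R0p: "R0 > 0" using R g0 e gam by (smt (verit) divide_pos_pos mult_pos_pos zero_less_power)
  have a: "2/(g*R0) \<le> \<epsilon>/\<gamma>^2"
  proof -
    have "2*\<gamma>^2/\<epsilon> \<le> g * R0"
      using R g0 e by (simp add: field_simps)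
    then have "2*\<gamma>^2 \<le> \<epsilon> * (g * R0)" using e by (simp add: field_simps)
    then show ?thesis using g0 R0p gam by (simp add: field_simps)
  qed
  have b: "4/g^2 \<le> (4 + \<epsilon>)/\<gamma>^2"
  proof -
    have "4 \<le> (4 + \<epsilon>) * (1 - \<epsilon>/16)^2"
    proof -
      have "(4 + \<epsilon>) * (1 - \<epsilon>/16)^2 - 4 = \<epsilon> * ((1/2 - 7*\<epsilon>/64) + \<epsilon>^2/256)"
        by (simp add: power2_eq_square field_simps)
      also have "\<dots> \<ge> 0" using e by (intro mult_nonneg_nonneg add_nonneg_nonneg) auto
      finally show ?thesis by simp
    qed
    then have "4 * \<gamma>^2 \<le> ((4 + \<epsilon>) * (1 - \<epsilon>/16)^2) * \<gamma>^2"
      by (intro mult_right_mono) auto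
    also have "\<dots> = (4 + \<epsilon>) * g^2" unfolding gdef by (simp add: power_mult_distrib)
    finally have "4 * \<gamma>^2 \<le> (4 + \<epsilon>) * g^2" .
    then show ?thesis using g0 gam by (simp add: field_simps)
  qed
  show ?thesis using a b by (simp add: add_divide_distrib)
qed

lemma coef_ineq:
  fixes \<epsilon> \<gamma> g R0 T s dg wt P :: real
  assumes e: "0 < \<epsilon>" "\<epsilon> < 1" and gam: "\<gamma> > 0" and gdef: "g = \<gamma> * (1 - \<epsilon>/16)"
    and R: "R0 \<ge> 2*\<gamma>^2/(\<epsilon>*g)" and T: "T > 0" and s: "0 \<le> s" "s \<le> \<epsilon>/8"
    and wt: "wt \<ge> 0" and P: "P > 0" and dg: "dg = pi*T*wt/P"
  shows "2*dg*(1-2* s) - 2*(pi/T)*(4/g^2 + 2/(g*R0))*wt*(1+2* s)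
         \<ge> 2*pi*T*((1-\<epsilon>)/P - 4*(1+\<epsilon>)/(T^2*\<gamma>^2))*wt"
proof -
  define \<beta> where "\<beta> = 4/g^2 + 2/(g*R0)"
  have be: "\<beta> \<le> (4 + 2*\<epsilon>)/\<gamma>^2" unfolding \<beta>_def by (rule beta_ineq[OF e gam gdef R])
  have dg0: "dg \<ge> 0" unfolding dg using T wt P by simp
  have A: "2*dg*(1-2* s) \<ge> 2*(1-\<epsilon>)*dg"
  proof -
    have "1-\<epsilon> \<le> 1-2* s" using s by linarith
    then have h: "dg*(1-\<epsilon>) \<le> dg*(1-2* s)" using dg0 by (rule mult_left_mono)
    have "2*(1-\<epsilon>)*dg = 2*(dg*(1-\<epsilon>))" by simp
    also have "\<dots> \<le> 2*(dg*(1-2* s))" using h by simp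
    also have "\<dots> = 2*dg*(1-2* s)" by simp
    finally show ?thesis .
  qed
  have B: "\<beta>*(1+2* s) \<le> 4*(1+\<epsilon>)/\<gamma>^2"
  proof -
    have b0: "\<beta> \<ge> 0"
    proof -
      have "g > 0" using e gam gdef by simp
      moreover have "R0 > 0" using R \<open>g > 0\<close> e gam by (smt (verit) divide_pos_pos mult_pos_pos zero_less_power)
      ultimately show ?thesis unfolding \<beta>_def by simp
    qed
    have "\<beta>*(1+2* s) \<le> ((4 + 2*\<epsilon>)/\<gamma>^2) * (1 + \<epsilon>/4)"
      using be b0 s e by (intro mult_mono) auto
    also have "\<dots> \<le> 4*(1+\<epsilon>)/\<gamma>^2"
    proof -
      have "(4 + 2*\<epsilon>) * (1 + \<epsilon>/4) \<le> 4*(1+\<epsilon>)"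
      proof -
        have "4*(1+\<epsilon>) - (4 + 2*\<epsilon>) * (1 + \<epsilon>/4) = \<epsilon> * (2 - \<epsilon>) / 2"
          by (simp add: field_simps power2_eq_square)
        also have "\<dots> \<ge> 0" using e by simp
        finally show ?thesis by simp
      qed
      then show ?thesis using gam by (simp add: divide_right_mono)
    qed
    finally show ?thesis .
  qed
  have B2: "2*(pi/T)*\<beta>*wt*(1+2* s) \<le> 2*(pi/T)*(4*(1+\<epsilon>)/\<gamma>^2)*wt"
  proof -
    have "2*(pi/T)*\<beta>*wt*(1+2* s) = (2*(pi/T)*wt) * (\<beta>*(1+2* s))" by (simp add: algebra_simps)
    also have "\<dots> \<le> (2*(pi/T)*wt) * (4*(1+\<epsilon>)/\<gamma>^2)"
      using B T wt by (intro mult_left_mono) auto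
    finally show ?thesis by (simp add: algebra_simps)
  qed
  have R1: "2*pi*T*((1-\<epsilon>)/P - 4*(1+\<epsilon>)/(T^2*\<gamma>^2))*wt = 2*(1-\<epsilon>)*dg - 2*(pi/T)*(4*(1+\<epsilon>)/\<gamma>^2)*wt"
    unfolding dg using T P gam by (simp add: field_simps power2_eq_square)
  show ?thesis using A B2 R1 unfolding \<beta>_def by linarith
qed



lemma lin_comb:
  fixes a x r1 r2 u :: real
  assumes "a \<le> 2 * x - 4 * u" "x \<le> r1" "r2 \<le> u"
  shows "a \<le> 2 * r1 - 4 * r2"
  using assms by linarith

theorem lemma5p6:
  fixes \<omega> c :: "nat \<Rightarrow> complex" and \<gamma> M :: real
  assumes nz: "\<forall>n\<ge>1. \<omega> n \<noteq> 0"
    and gap: "liminf (\<lambda>n. ereal (Re (\<omega> (Suc n)) - Re (\<omega> n))) = ereal \<gamma>"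
    and gpos: "\<gamma> > 0"
    and bdd: "\<exists>B. \<forall>n\<ge>1. \<bar>Im (\<omega> n)\<bar> \<le> B"
    and Mpos: "M > 0"
    and cbd: "\<forall>n\<ge>1. cmod (c n) \<le> M / cmod (\<omega> n)"
  shows "\<forall>\<epsilon>. 0 < \<epsilon> \<and> \<epsilon> < 1 \<longrightarrow>
          (\<exists>n0\<ge>1. \<forall>T. T > 2 * pi / (\<gamma> * sqrt (1 - \<epsilon>)) \<longrightarrow>
             (\<forall>C :: nat \<Rightarrow> complex. summable (\<lambda>n. (cmod (C n))\<^sup>2) \<longrightarrow>
               (\<exists>L. (\<lambda>N. integral {0..} (\<lambda>t. kfun T t *
                        ((cmod (psum \<omega> C n0 N t))\<^sup>2
                         - 2 * (cmod (psum \<omega> (\<lambda>n. c n * C n) n0 N t))\<^sup>2)))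
                      \<longlonglongrightarrow> L
                  \<and> L \<ge> 2 * pi * T * (\<Sum>m. let n = m + n0 in
                        ((1 - \<epsilon>) / (pi\<^sup>2 + 4 * T\<^sup>2 * (Im (\<omega> n))\<^sup>2)
                          - 4 * (1 + \<epsilon>) / (T\<^sup>2 * \<gamma>\<^sup>2))
                        * (1 + exp (- 2 * Im (\<omega> n) * T)) * (cmod (C n))\<^sup>2))))"
proof (intro allI impI)
  fix \<epsilon> :: real assume eps: "0 < \<epsilon> \<and> \<epsilon> < 1"
  then have e1: "0 < \<epsilon>" and e2: "\<epsilon> < 1" by auto
  define g where "g = \<gamma> * (1 - \<epsilon>/16)"
  have g0: "g > 0" using gpos e2 by (simp add: g_def)
  have glt: "g < \<gamma>" using gpos e1 by (simp add: g_def)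
  have "eventually (\<lambda>n. ereal g < ereal (Re (\<omega> (Suc n)) - Re (\<omega> n))) sequentially"
    using less_LiminfD[of "ereal g" sequentially "\<lambda>n. ereal (Re (\<omega> (Suc n)) - Re (\<omega> n))"] gap glt by simp
  then obtain N1 where N1: "\<And>n. n \<ge> N1 \<Longrightarrow> g < Re (\<omega> (Suc n)) - Re (\<omega> n)"
    by (auto simp: eventually_sequentially)
  define n1 where "n1 = max 1 N1"
  have incr: "Re (\<omega> n1) + real k * g \<le> Re (\<omega> (n1 + k))" for k
  proof (induction k)
    case 0 then show ?case by simp
  next
    case (Suc k)
    have "g < Re (\<omega> (Suc (n1 + k))) - Re (\<omega> (n1 + k))" using N1[of "n1 + k"] by (simp add: n1_def)
    then show ?case using Suc by (simp add: algebra_simps)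
  qed
  define R0 where "R0 = max g (max (2*\<gamma>^2/(\<epsilon>*g)) (8*M/\<epsilon>))"
  have gR0: "g \<le> R0" and R0a: "2*\<gamma>^2/(\<epsilon>*g) \<le> R0" and R0b: "8*M/\<epsilon> \<le> R0"
    by (simp_all add: R0_def)
  have R0pos: "R0 > 0" using gR0 g0 by simp
  define k where "k = nat \<lceil>(R0 - Re (\<omega> n1))/g\<rceil>"
  define n0 where "n0 = n1 + k"
  have R0n0: "R0 \<le> Re (\<omega> n0)"
  proof -
    have "(R0 - Re (\<omega> n1))/g \<le> real k" unfolding k_def by (rule real_nat_ceiling_ge)
    then have "R0 - Re (\<omega> n1) \<le> real k * g" using g0 by (simp add: pos_divide_le_eq)
    then show ?thesis using incr[of k] unfolding n0_def by linarith
  qed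
  have n0ge: "n0 \<ge> 1" "n0 \<ge> N1" by (simp_all add: n0_def n1_def)
  have gapn0: "Re (\<omega> n) + g \<le> Re (\<omega> (Suc n))" if "n \<ge> n0" for n
    using N1[of n] that n0ge by simp
  show "\<exists>n0\<ge>1. \<forall>T. T > 2 * pi / (\<gamma> * sqrt (1 - \<epsilon>)) \<longrightarrow>
             (\<forall>C :: nat \<Rightarrow> complex. summable (\<lambda>n. (cmod (C n))\<^sup>2) \<longrightarrow>
               (\<exists>L. (\<lambda>N. integral {0..} (\<lambda>t. kfun T t *
                        ((cmod (psum \<omega> C n0 N t))\<^sup>2
                         - 2 * (cmod (psum \<omega> (\<lambda>n. c n * C n) n0 N t))\<^sup>2)))
                      \<longlonglongrightarrow> L
                  \<and> L \<ge> 2 * pi * T * (\<Sum>m. let n = m + n0 in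
                        ((1 - \<epsilon>) / (pi\<^sup>2 + 4 * T\<^sup>2 * (Im (\<omega> n))\<^sup>2)
                          - 4 * (1 + \<epsilon>) / (T\<^sup>2 * \<gamma>\<^sup>2))
                        * (1 + exp (- 2 * Im (\<omega> n) * T)) * (cmod (C n))\<^sup>2)))"
  proof (intro exI[of _ n0] conjI allI impI)
    show "1 \<le> n0" by (rule n0ge)
    fix T :: real assume Tgt: "T > 2 * pi / (\<gamma> * sqrt (1 - \<epsilon>))"
    have sq0: "0 < sqrt (1 - \<epsilon>)" using e2 by simp
    have sq1: "sqrt (1 - \<epsilon>) \<le> 1 - \<epsilon>/16"
    proof -
      have "1 - \<epsilon> \<le> (1 - \<epsilon>/16)^2" using e1 by (simp add: power2_eq_square algebra_simps)
      then have "sqrt (1 - \<epsilon>) \<le> sqrt ((1 - \<epsilon>/16)^2)" by (rule real_sqrt_le_mono)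
      then show ?thesis using e2 by simp
    qed
    have gs: "\<gamma> * sqrt (1 - \<epsilon>) > 0" using gpos sq0 by simp
    have T0: "T > 0" using Tgt gs by (smt (verit) divide_pos_pos pi_gt_zero)
    have bg: "2*(pi/T) \<le> g"
    proof -
      have "2 * pi < T * (\<gamma> * sqrt (1 - \<epsilon>))" using Tgt gs by (simp add: divide_less_eq)
      then have "2 * pi / T < \<gamma> * sqrt (1 - \<epsilon>)" using T0 by (simp add: divide_less_eq mult.commute)
      also have "\<dots> \<le> g" unfolding g_def using sq1 gpos by (intro mult_left_mono) auto
      finally show ?thesis by simp
    qed
    interpret I: ing \<omega> T g R0 n0
      using T0 g0 bg gapn0 R0n0 gR0 by unfold_locales auto
    fix C :: "nat \<Rightarrow> complex" assume sumC: "summable (\<lambda>n. (cmod (C n))\<^sup>2)"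
    obtain B where B: "\<And>n. n \<ge> 1 \<Longrightarrow> \<bar>Im (\<omega> n)\<bar> \<le> B" using bdd by auto
    define W where "W = 1 + exp (2*B*T)"
    have W0: "W \<ge> 0" by (simp add: W_def add_nonneg_nonneg)
    have wtW: "I.wt n \<le> W" if "n \<ge> n0" for n
    proof -
      have "- Im (\<omega> n) \<le> B" using B[of n] that n0ge by simp
      then have "(- Im (\<omega> n)) * T \<le> B * T" using T0 by (intro mult_right_mono) auto
      then have "- 2 * Im (\<omega> n) * T \<le> 2*B*T" by (simp add: mult.commute)
      then show ?thesis unfolding I.wt_def W_def by simp
    qed
    have cle: "cmod (c n) \<le> \<epsilon>/8" if "n \<ge> n0" for n
    proof -
      have "R0 \<le> Re (\<omega> n)" using I.Re_ge[OF that] g0 by (smt (verit) mult_nonneg_nonneg of_nat_0_le_iff)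
      then have Rw: "R0 \<le> cmod (\<omega> n)" using complex_Re_le_cmod[of "\<omega> n"] by linarith
      have "cmod (c n) \<le> M / cmod (\<omega> n)" using cbd that n0ge by simp
      also have "\<dots> \<le> M / R0" using Rw R0pos Mpos by (intro divide_left_mono mult_pos_pos) linarith+
      also have "\<dots> \<le> \<epsilon>/8"
      proof -
        have "8*M \<le> \<epsilon> * R0" using R0b e1 by (simp add: field_simps)
        then show ?thesis using R0pos by (simp add: field_simps)
      qed
      finally show ?thesis .
    qed
    define cC where "cC = (\<lambda>n. c n * C n)"
    define SC where "SC = (\<Sum>n. (cmod (C n))^2)"
    have sumI: "(\<Sum>n\<in>{n0..<N}. (cmod (C n))^2) \<le> SC" for N
      unfolding SC_def by (rule sum_le_suminf[OF sumC]) auto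
    have yC: "(\<Sum>n\<in>{n0..<N}. I.yy C n) \<le> W * SC" for N
    proof -
      have "(\<Sum>n\<in>{n0..<N}. I.yy C n) \<le> (\<Sum>n\<in>{n0..<N}. W * (cmod (C n))^2)"
        unfolding I.yy_def using wtW by (intro sum_mono mult_right_mono) auto
      also have "\<dots> = W * (\<Sum>n\<in>{n0..<N}. (cmod (C n))^2)" by (simp add: sum_distrib_left)
      also have "\<dots> \<le> W * SC" using sumI W0 by (intro mult_left_mono) auto
      finally show ?thesis .
    qed
    have ycC: "(\<Sum>n\<in>{n0..<N}. I.yy cC n) \<le> W * SC" for N
    proof -
      have "(\<Sum>n\<in>{n0..<N}. I.yy cC n) \<le> (\<Sum>n\<in>{n0..<N}. I.yy C n)"
      proof (intro sum_mono)
        fix n assume "n \<in> {n0..<N}"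
        then have "cmod (c n) \<le> 1" using cle[of n] e2 by simp
        then have "(cmod (cC n))^2 \<le> (cmod (C n))^2"
          unfolding cC_def norm_mult power_mult_distrib
          by (intro mult_left_le_one_le) (auto simp: power_le_one)
        then show "I.yy cC n \<le> I.yy C n" unfolding I.yy_def
          using I.wt_pos[of n] by (intro mult_left_mono) auto
      qed
      then show ?thesis using yC[of N] by linarith
    qed
    obtain LC where LC: "(\<lambda>N. Ssum T \<omega> C n0 N) \<longlonglongrightarrow> LC"
      using I.Ssum_convergent[OF yC] unfolding convergent_def by blast
    obtain Lc where Lc: "(\<lambda>N. Ssum T \<omega> cC n0 N) \<longlonglongrightarrow> Lc"
      using I.Ssum_convergent[OF ycC] unfolding convergent_def by blast
    have int_eq: "integral {0..} (\<lambda>t. kfun T t * ((cmod (psum \<omega> C n0 N t))\<^sup>2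
                         - 2 * (cmod (psum \<omega> (\<lambda>n. c n * C n) n0 N t))\<^sup>2))
           = 2 * Re (Ssum T \<omega> C n0 N) - 4 * Re (Ssum T \<omega> cC n0 N)" for N
      using main_integral[OF T0, of \<omega> C n0 N cC] unfolding cC_def by (rule integral_unique)
    define f where "f n = ((1 - \<epsilon>) / (pi\<^sup>2 + 4 * T\<^sup>2 * (Im (\<omega> n))\<^sup>2)
                          - 4 * (1 + \<epsilon>) / (T\<^sup>2 * \<gamma>\<^sup>2))
                        * (1 + exp (- 2 * Im (\<omega> n) * T)) * (cmod (C n))\<^sup>2" for n
    show "\<exists>L. (\<lambda>N. integral {0..} (\<lambda>t. kfun T t *
                        ((cmod (psum \<omega> C n0 N t))\<^sup>2
                         - 2 * (cmod (psum \<omega> (\<lambda>n. c n * C n) n0 N t))\<^sup>2)))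
                      \<longlonglongrightarrow> L
                  \<and> L \<ge> 2 * pi * T * (\<Sum>m. let n = m + n0 in
                        ((1 - \<epsilon>) / (pi\<^sup>2 + 4 * T\<^sup>2 * (Im (\<omega> n))\<^sup>2)
                          - 4 * (1 + \<epsilon>) / (T\<^sup>2 * \<gamma>\<^sup>2))
                        * (1 + exp (- 2 * Im (\<omega> n) * T)) * (cmod (C n))\<^sup>2)"
    proof (intro exI conjI)
      show "(\<lambda>N. integral {0..} (\<lambda>t. kfun T t *
                        ((cmod (psum \<omega> C n0 N t))\<^sup>2
                         - 2 * (cmod (psum \<omega> (\<lambda>n. c n * C n) n0 N t))\<^sup>2)))
                      \<longlonglongrightarrow> 2 * Re LC - 4 * Re Lc"
        unfolding int_eq by (intro tendsto_intros LC Lc)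
      have pern: "2 * I.diag n * (cmod (C n))^2 - 2 * (I.b * I.beta) * I.yy C n
                 - (4 * I.diag n * (cmod (cC n))^2 + 4 * (I.b * I.beta) * I.yy cC n) \<ge> 2 * pi * T * f n"
        if "n \<ge> n0" for n
      proof -
        define s where "s = (cmod (c n))^2"
        define X where "X = (cmod (C n))^2"
        define P where "P = pi\<^sup>2 + 4 * T\<^sup>2 * (Im (\<omega> n))\<^sup>2"
        have X0: "X \<ge> 0" by (simp add: X_def)
        have P0: "P > 0" unfolding P_def by (intro add_pos_nonneg) auto
        have s0: "0 \<le> s" by (simp add: s_def)
        have s1: "s \<le> \<epsilon>/8"
        proof -
          have "cmod (c n) \<le> \<epsilon>/8" by (rule cle[OF that])
          moreover have "\<epsilon>/8 \<le> 1" using e2 by simp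
          ultimately have "cmod (c n) * cmod (c n) \<le> cmod (c n) * 1"
            by (intro mult_left_mono) auto
          then show ?thesis unfolding s_def power2_eq_square using \<open>cmod (c n) \<le> \<epsilon>/8\<close> by linarith
        qed
        have cc: "(cmod (cC n))^2 = s * X" unfolding cC_def s_def X_def by (simp add: norm_mult power_mult_distrib)
        have dg: "I.diag n = pi * T * I.wt n / P" unfolding I.diag_def I.wt_def P_def by simp
        have ci: "2*I.diag n*(1-2* s) - 2*(pi/T)*(4/g^2 + 2/(g*R0))*I.wt n*(1+2* s)
             \<ge> 2*pi*T*((1-\<epsilon>)/P - 4*(1+\<epsilon>)/(T^2*\<gamma>^2))*I.wt n"
          by (rule coef_ineq[OF e1 e2 gpos g_def R0a T0 s0 s1 less_imp_le[OF I.wt_pos] P0 dg])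
        have "2 * I.diag n * (cmod (C n))^2 - 2 * (I.b * I.beta) * I.yy C n
                 - (4 * I.diag n * (cmod (cC n))^2 + 4 * (I.b * I.beta) * I.yy cC n)
             = (2*I.diag n*(1-2* s) - 2*(pi/T)*(4/g^2 + 2/(g*R0))*I.wt n*(1+2* s)) * X"
        proof -
          have bb: "2*(pi/T)*(4/g^2 + 2/(g*R0)) = 2*(I.b*I.beta)" by (simp add: I.b_def I.beta_def)
          have "(2*I.diag n*(1-2* s) - 2*(pi/T)*(4/g^2 + 2/(g*R0))*I.wt n*(1+2* s)) * X
              = (2*I.diag n*(1-2* s) - 2*(I.b*I.beta)*I.wt n*(1+2* s)) * X"
            by (simp only: bb)
          also have "\<dots> = 2 * I.diag n * X - 2 * (I.b * I.beta) * (I.wt n * X)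
                 - (4 * I.diag n * (s * X) + 4 * (I.b * I.beta) * (I.wt n * (s * X)))"
            by (simp add: algebra_simps)
          finally show ?thesis unfolding I.yy_def cc X_def[symmetric] cC_def[symmetric] by simp
        qed
        also have "\<dots> \<ge> (2*pi*T*((1-\<epsilon>)/P - 4*(1+\<epsilon>)/(T^2*\<gamma>^2))*I.wt n) * X"
          using ci X0 by (rule mult_right_mono)
        also have "(2*pi*T*((1-\<epsilon>)/P - 4*(1+\<epsilon>)/(T^2*\<gamma>^2))*I.wt n) * X = 2 * pi * T * f n"
          unfolding f_def P_def X_def I.wt_def by (simp add: algebra_simps)
        finally show ?thesis .
      qed
      have lowN: "2 * Re (Ssum T \<omega> C n0 N) - 4 * Re (Ssum T \<omega> cC n0 N) \<ge> 2 * pi * T * (\<Sum>n\<in>{n0..<N}. f n)" for N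
      proof -
        have r1: "Re (Ssum T \<omega> C n0 N) \<ge> (\<Sum>n\<in>{n0..<N}. I.diag n * (cmod (C n))^2) - I.b * I.beta * (\<Sum>n\<in>{n0..<N}. I.yy C n)"
          by (rule I.Re_Ssum_bounds(1))
        have r2: "Re (Ssum T \<omega> cC n0 N) \<le> (\<Sum>n\<in>{n0..<N}. I.diag n * (cmod (cC n))^2) + I.b * I.beta * (\<Sum>n\<in>{n0..<N}. I.yy cC n)"
          by (rule I.Re_Ssum_bounds(2))
        have "2 * pi * T * (\<Sum>n\<in>{n0..<N}. f n) = (\<Sum>n\<in>{n0..<N}. 2 * pi * T * f n)"
          by (simp add: sum_distrib_left)
        also have "\<dots> \<le> (\<Sum>n\<in>{n0..<N}. 2 * I.diag n * (cmod (C n))^2 - 2 * (I.b * I.beta) * I.yy C n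
                 - (4 * I.diag n * (cmod (cC n))^2 + 4 * (I.b * I.beta) * I.yy cC n))"
          using pern by (intro sum_mono) auto
        also have "\<dots> = 2 * ((\<Sum>n\<in>{n0..<N}. I.diag n * (cmod (C n))^2) - I.b * I.beta * (\<Sum>n\<in>{n0..<N}. I.yy C n))
             - 4 * ((\<Sum>n\<in>{n0..<N}. I.diag n * (cmod (cC n))^2) + I.b * I.beta * (\<Sum>n\<in>{n0..<N}. I.yy cC n))"
          by (simp add: sum_subtractf sum.distrib sum_distrib_left algebra_simps)
        finally have h: "2 * pi * T * (\<Sum>n\<in>{n0..<N}. f n) \<le> 2 * ((\<Sum>n\<in>{n0..<N}. I.diag n * (cmod (C n))^2) - I.b * I.beta * (\<Sum>n\<in>{n0..<N}. I.yy C n))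
             - 4 * ((\<Sum>n\<in>{n0..<N}. I.diag n * (cmod (cC n))^2) + I.b * I.beta * (\<Sum>n\<in>{n0..<N}. I.yy cC n))" .
        show ?thesis by (rule lin_comb[OF h r1 r2])
      qed
      have sumf: "summable (\<lambda>m. f (m + n0))"
      proof (rule summable_comparison_test)
        define Kc where "Kc = (1/pi^2 + 4 * (1 + \<epsilon>) / (T\<^sup>2 * \<gamma>\<^sup>2)) * W"
        show "summable (\<lambda>m. Kc * (cmod (C (m + n0)))^2)"
          by (intro summable_mult summable_ignore_initial_segment sumC)
        show "\<exists>N. \<forall>m\<ge>N. norm (f (m + n0)) \<le> Kc * (cmod (C (m + n0)))^2"
        proof (intro exI allI impI)
          fix m :: nat
          define n where "n = m + n0"
          define P where "P = pi\<^sup>2 + 4 * T\<^sup>2 * (Im (\<omega> n))\<^sup>2"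
          define q where "q = 4 * (1 + \<epsilon>) / (T\<^sup>2 * \<gamma>\<^sup>2)"
          have q0: "q \<ge> 0" unfolding q_def using e1 by simp
          have Pge: "P \<ge> pi^2" unfolding P_def by simp
          have pi2: "pi^2 > 0" by simp
          have Ppos: "P > 0" using Pge pi2 by linarith
          have a0: "(1 - \<epsilon>)/P \<ge> 0" using e2 Ppos by (intro divide_nonneg_pos) auto
          have a1: "(1 - \<epsilon>)/P \<le> 1/pi^2"
          proof -
            have "(1 - \<epsilon>)/P \<le> 1/P" using e1 Ppos by (intro divide_right_mono) auto
            also have "\<dots> \<le> 1/pi^2" using Pge pi2 Ppos by (intro divide_left_mono mult_pos_pos) auto
            finally show ?thesis .
          qed
          have cabs: "\<bar>(1 - \<epsilon>)/P - q\<bar> \<le> 1/pi^2 + q" using a0 a1 q0 by linarith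
          have wn: "0 \<le> 1 + exp (- 2 * Im (\<omega> n) * T)" "1 + exp (- 2 * Im (\<omega> n) * T) \<le> W"
            using wtW[of n] unfolding n_def I.wt_def by (auto intro: add_nonneg_nonneg)
          have "norm (f n) = \<bar>(1 - \<epsilon>)/P - q\<bar> * (1 + exp (- 2 * Im (\<omega> n) * T)) * (cmod (C n))^2"
            unfolding f_def P_def q_def using wn by (simp add: abs_mult)
          also have "\<dots> \<le> (1/pi^2 + q) * W * (cmod (C n))^2"
            using cabs wn by (intro mult_right_mono mult_mono) auto
          finally show "norm (f (m + n0)) \<le> Kc * (cmod (C (m + n0)))^2"
            unfolding Kc_def q_def n_def by simp
        qed
      qed
      have limf: "(\<lambda>N. 2 * pi * T * (\<Sum>n\<in>{n0..<N}. f n)) \<longlonglongrightarrow> 2 * pi * T * (\<Sum>m. f (m + n0))"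
      proof -
        have "(\<lambda>N. (\<Sum>n\<in>{n0..<N + n0}. f n)) \<longlonglongrightarrow> (\<Sum>m. f (m + n0))"
        proof -
          have "(\<Sum>n\<in>{n0..<N + n0}. f n) = (\<Sum>i<N. f (i + n0))" for N
            using sum.shift_bounds_nat_ivl[of f 0 n0 N] by (simp add: atLeast0LessThan)
          then show ?thesis using summable_LIMSEQ[OF sumf] by simp
        qed
        then have "(\<lambda>N. (\<Sum>n\<in>{n0..<N}. f n)) \<longlonglongrightarrow> (\<Sum>m. f (m + n0))"
          by (rule LIMSEQ_offset)
        then show ?thesis by (intro tendsto_intros)
      qed
      have "2 * pi * T * (\<Sum>m. f (m + n0)) \<le> 2 * Re LC - 4 * Re Lc"
      proof (rule tendsto_le[OF trivial_limit_sequentially])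
        show "(\<lambda>N. 2 * Re (Ssum T \<omega> C n0 N) - 4 * Re (Ssum T \<omega> cC n0 N)) \<longlonglongrightarrow> 2 * Re LC - 4 * Re Lc"
          by (intro tendsto_intros LC Lc)
        show "(\<lambda>N. 2 * pi * T * (\<Sum>n\<in>{n0..<N}. f n)) \<longlonglongrightarrow> 2 * pi * T * (\<Sum>m. f (m + n0))" by (rule limf)
        show "\<forall>\<^sub>F N in sequentially. 2 * pi * T * (\<Sum>n\<in>{n0..<N}. f n) \<le> 2 * Re (Ssum T \<omega> C n0 N) - 4 * Re (Ssum T \<omega> cC n0 N)"
          using lowN by simp
      qed
      then show "2 * pi * T * (\<Sum>m. let n = m + n0 in
                        ((1 - \<epsilon>) / (pi\<^sup>2 + 4 * T\<^sup>2 * (Im (\<omega> n))\<^sup>2)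
                          - 4 * (1 + \<epsilon>) / (T\<^sup>2 * \<gamma>\<^sup>2))
                        * (1 + exp (- 2 * Im (\<omega> n) * T)) * (cmod (C n))\<^sup>2) \<le> 2 * Re LC - 4 * Re Lc"
        by (simp add: f_def Let_def)
    qed
  qed
qed


end
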